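(* For $n \ge 2$ with $n \equiv 2 \pmod 6$, if $G \cong P_n$ and $v$ is an arbitrary vertex of $G$, then $\gamma_{\rm tg}(G|v) \le \gamma_{\rm tg}(G) - 1$.
   Context: Total domination game on a graph without isolated vertices: Dominator and Staller alternately choose vertices, each chosen vertex must be adjacent to some vertex not yet totally dominated; the game ends when no legal move exists; Dominator minimizes, Staller maximizes the number of moves; $\gamma_{\rm tg}(G)$ is the number of moves in the Dominator-start game under optimal play. $G|v$ is $G$ with $v$ declared already totally dominated, and $\gamma_{\rm tg}(G|v)$ is the corresponding optimal number of moves in the Dominator-start game. *)

theory Defs
  imports Main
begin

text \<open>A finite simple graph is given by a vertex set V and a symmetric,
irreflexive adjacency relation E (only its restriction to V matters).\<close>

definition open_nbhd :: "'a set \<Rightarrow> ('a \<Rightarrow> 'a \<Rightarrow> bool) \<Rightarrow> 'a \<Rightarrow> 'a set" where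
  "open_nbhd V E u = {w \<in> V. E u w}"

text \<open>Legal moves when D is the set of already totally dominated vertices:
a vertex u is legal iff it has a neighbour that is not yet totally dominated.\<close>

definition legal_moves :: "'a set \<Rightarrow> ('a \<Rightarrow> 'a \<Rightarrow> bool) \<Rightarrow> 'a set \<Rightarrow> 'a set" where
  "legal_moves V E D = {u \<in> V. open_nbhd V E u - D \<noteq> {}}"

text \<open>Optimal number of remaining moves from the position where D is totally
dominated; the Boolean says whether Dominator is to move.  The first argument is
a fuel bound; every move totally dominates at least one new vertex of V, so
fuel card V + 1 is more than enough for the game to end.\<close>

fun tg_val :: "nat \<Rightarrow> 'a set \<Rightarrow> ('a \<Rightarrow> 'a \<Rightarrow> bool) \<Rightarrow> 'a set \<Rightarrow> bool \<Rightarrow> nat" where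
  "tg_val 0 V E D d = 0"
| "tg_val (Suc f) V E D d =
     (if legal_moves V E D = {} then 0
      else if d then 1 + Min ((\<lambda>u. tg_val f V E (D \<union> open_nbhd V E u) False) ` legal_moves V E D)
      else 1 + Max ((\<lambda>u. tg_val f V E (D \<union> open_nbhd V E u) True) ` legal_moves V E D))"

text \<open>Game total domination number of G|S (vertices of S declared totally
dominated), Dominator-start game.\<close>

definition gamma_tg_rel :: "'a set \<Rightarrow> ('a \<Rightarrow> 'a \<Rightarrow> bool) \<Rightarrow> 'a set \<Rightarrow> nat" where
  "gamma_tg_rel V E S = tg_val (Suc (card V)) V E S True"

definition gamma_tg :: "'a set \<Rightarrow> ('a \<Rightarrow> 'a \<Rightarrow> bool) \<Rightarrow> nat" where
  "gamma_tg V E = gamma_tg_rel V E {}"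

definition path_V :: "nat \<Rightarrow> nat set" where
  "path_V n = {0..<n}"

definition path_E :: "nat \<Rightarrow> nat \<Rightarrow> bool" where
  "path_E i j \<longleftrightarrow> i = Suc j \<or> j = Suc i"

definition graph_iso :: "'a set \<Rightarrow> ('a \<Rightarrow> 'a \<Rightarrow> bool) \<Rightarrow> 'b set \<Rightarrow> ('b \<Rightarrow> 'b \<Rightarrow> bool) \<Rightarrow> bool" where
  "graph_iso V E V' E' \<longleftrightarrow> (\<exists>f. bij_betw f V V' \<and> (\<forall>x\<in>V. \<forall>y\<in>V. E x y \<longleftrightarrow> E' (f x) (f y)))"

end

theory Submission
  imports Defs
begin


fun runs :: "bool list \<Rightarrow> nat list" where
  "runs [] = [0]"
| "runs (True # l) = Suc (hd (runs l)) # tl (runs l)"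
| "runs (False # l) = 0 # runs l"

lemma runs_ne[simp]: "runs l \<noteq> []"
  by (cases l rule: runs.cases) auto

lemma runs_append: "runs (xs @ ys) = butlast (runs xs) @ [last (runs xs) + hd (runs ys)] @ tl (runs ys)"
proof (induction xs rule: runs.induct)
  case 1
  then show ?case by (cases "runs ys") auto
next
  case (2 l)
  then show ?case by (cases "runs l"; cases "tl (runs l)") auto
next
  case (3 l)
  then show ?case by (cases "runs l") auto
qed

lemma runs_False_app: "runs (xs @ False # ys) = runs xs @ runs ys"
  by (simp add: runs_append)

lemma runs_rep: "runs (replicate k True @ ys) = (k + hd (runs ys)) # tl (runs ys)"
  by (induction k) auto


definition rb :: "nat \<Rightarrow> nat" where "rb L = (2*L+1) div 3"
lemma rb3: "rb (3*k + r) = 2*k + rb r"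
  unfolding rb_def by simp
lemma lt3: "(i::nat) < 3 \<Longrightarrow> i = 0 \<or> i = 1 \<or> i = 2" by auto
lemma rb_small: "rb 0 = 0" "rb 1 = 1" "rb 2 = 1" "rb 3 = 2" "rb 4 = 3" "rb 5 = 3" "rb 6 = 4"
  by (simp_all add: rb_def)
lemma rb_pair: "rb (a+2+c) = rb a + rb c + (if (a mod 3 = 0 \<and> c mod 3 = 2) \<or> (a mod 3 = 2 \<and> c mod 3 = 0) \<or> (a mod 3 = 2 \<and> c mod 3 = 2) then 2 else 1)"
proof -
  define i where "i = a mod 3"
  define j where "j = c mod 3"
  define p where "p = a div 3"
  define q where "q = c div 3"
  have a: "a = 3*p + i" and c: "c = 3*q + j" unfolding i_def j_def p_def q_def by simp_all
  have "a + 2 + c = 3*(p+q) + (i+j+2)" using a c by simp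
  then have "rb (a+2+c) = 2*(p+q) + rb (i+j+2)" using rb3[of "p+q" "i+j+2"] by (simp only:)
  moreover have "rb a = 2*p + rb i" "rb c = 2*q + rb j" using a c rb3 by auto
  moreover have "i < 3" "j < 3" unfolding i_def j_def by simp_all
  ultimately show ?thesis unfolding i_def[symmetric] j_def[symmetric]
    using lt3[OF \<open>i < 3\<close>] lt3[OF \<open>j < 3\<close>] by (elim disjE) (simp_all add: rb_def)
qed
lemma rb_Suc: "rb (Suc c) = rb c + (if c mod 3 = 1 then 0 else 1)"
proof -
  define j where "j = c mod 3"
  define q where "q = c div 3"
  have c: "c = 3*q + j" unfolding j_def q_def by simp_all
  have "Suc c = 3*q + Suc j" using c by simp
  then have "rb (Suc c) = 2*q + rb (Suc j)" using rb3[of "q" "Suc j"] by (simp only:)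
  moreover have "rb c = 2*q + rb j" using c rb3 by auto
  moreover have "j < 3" unfolding j_def by simp_all
  ultimately show ?thesis unfolding j_def[symmetric]
    using lt3[OF \<open>j < 3\<close>] by (elim disjE) (simp_all add: rb_def)
qed

lemma mod_pair: "(a+2+c) mod 3 = ((a mod 3) + (c mod 3) + 2) mod (3::nat)"
proof -
  have "a + 2 + c = 3*(a div 3 + c div 3) + ((a mod 3) + (c mod 3) + 2)" by simp
  then show ?thesis by (metis mod_mult_self3 mult.commute)
qed
lemma mod_Suc3: "Suc c mod 3 = Suc (c mod 3) mod (3::nat)"
  by (simp add: mod_Suc_eq)

definition FF :: "nat list \<Rightarrow> nat" where "FF R = sum_list (map rb R)"
definition MM :: "nat list \<Rightarrow> nat" where "MM R = length (filter (\<lambda>L. L mod 3 = 2) R)"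
definition phi :: "bool \<Rightarrow> nat list \<Rightarrow> nat" where
  "phi d R = FF R + (if d then MM R div 2 else (MM R + 1) div 2)"

lemma FF_app[simp]: "FF (xs @ ys) = FF xs + FF ys" and FF_Cons[simp]: "FF (x # xs) = rb x + FF xs"
  and FF_Nil[simp]: "FF [] = 0"
  by (auto simp: FF_def)
lemma MM_app[simp]: "MM (xs @ ys) = MM xs + MM ys" and MM_Cons[simp]: "MM (x # xs) = (if x mod 3 = 2 then 1 else 0) + MM xs"
  and MM_Nil[simp]: "MM [] = 0"
  by (auto simp: MM_def)

lemma par2: "\<exists>t. (Y::nat) = 2*t \<or> Y = 2*t+1" by presburger
lemma e_Suc: "Suc c mod 3 = 2 \<longleftrightarrow> c mod 3 = (1::nat)" by (simp add: mod_Suc)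

lemma tr_single:
  "phi True (R1@[Suc c]@R2) \<le> 1 + phi False (R1@[0,c]@R2) \<and> 1 + phi True (R1@[0,c]@R2) \<le> phi False (R1@[Suc c]@R2)"
proof -
  define X where "X = FF R1 + FF R2"
  define Y where "Y = MM R1 + MM R2"
  define j where "j = c mod 3"
  have "j < 3" unfolding j_def by simp
  have e1: "phi True (R1@[Suc c]@R2) = X + rb c + (if j = 1 then 0 else 1) + (Y + (if j = 1 then 1 else 0)) div 2"
    by (simp add: phi_def X_def Y_def rb_Suc e_Suc j_def)
  have e2: "phi False (R1@[0,c]@R2) = X + rb c + (Y + (if j = 2 then 1 else 0) + 1) div 2"
    by (simp add: phi_def X_def Y_def j_def rb_def[of 0])
  have e3: "phi True (R1@[0,c]@R2) = X + rb c + (Y + (if j = 2 then 1 else 0)) div 2"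
    by (simp add: phi_def X_def Y_def j_def rb_def[of 0])
  have e4: "phi False (R1@[Suc c]@R2) = X + rb c + (if j = 1 then 0 else 1) + (Y + (if j = 1 then 1 else 0) + 1) div 2"
    by (simp add: phi_def X_def Y_def rb_Suc e_Suc j_def)
  obtain t where "Y = 2*t \<or> Y = 2*t+1" using par2 by blast
  then show ?thesis unfolding e1 e2 e3 e4 using lt3[OF \<open>j < 3\<close>]
    by (elim disjE) simp_all
qed

lemma tr_pair:
  "phi True (R1@[a+2+c]@R2) \<le> 1 + phi False (R1@[a,0,c]@R2) \<and> 1 + phi True (R1@[a,0,c]@R2) \<le> phi False (R1@[a+2+c]@R2)"
proof -
  define X where "X = FF R1 + FF R2"
  define Y where "Y = MM R1 + MM R2"
  define i where "i = a mod 3"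
  define j where "j = c mod 3"
  have "i < 3" "j < 3" unfolding i_def j_def by simp_all
  define k where "k = (i + j + 2) mod 3"
  define dl where "dl = (if (i = 0 \<and> j = 2) \<or> (i = 2 \<and> j = 0) \<or> (i = 2 \<and> j = 2) then 2 else (1::nat))"
  have m: "(a+2+c) mod 3 = k" unfolding k_def i_def j_def by (rule mod_pair)
  have r: "rb (a+2+c) = rb a + rb c + dl" unfolding dl_def i_def j_def by (rule rb_pair)
  have e1: "phi True (R1@[a+2+c]@R2) = X + rb a + rb c + dl + (Y + (if k = 2 then 1 else 0)) div 2"
    by (simp add: phi_def X_def Y_def r[simplified] m[simplified])
  have e4: "phi False (R1@[a+2+c]@R2) = X + rb a + rb c + dl + (Y + (if k = 2 then 1 else 0) + 1) div 2"
    by (simp add: phi_def X_def Y_def r[simplified] m[simplified])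
  have e2: "phi False (R1@[a,0,c]@R2) = X + rb a + rb c + (Y + (if i = 2 then 1 else 0) + (if j = 2 then 1 else 0) + 1) div 2"
    by (simp add: phi_def X_def Y_def i_def j_def rb_def[of 0])
  have e3: "phi True (R1@[a,0,c]@R2) = X + rb a + rb c + (Y + (if i = 2 then 1 else 0) + (if j = 2 then 1 else 0)) div 2"
    by (simp add: phi_def X_def Y_def i_def j_def rb_def[of 0])
  obtain t where "Y = 2*t \<or> Y = 2*t+1" using par2 by blast
  then show ?thesis unfolding e1 e2 e3 e4 k_def dl_def using lt3[OF \<open>i < 3\<close>] lt3[OF \<open>j < 3\<close>]
    by (elim disjE) simp_all
qed

lemma e_Suc1: "Suc c mod 3 = 1 \<longleftrightarrow> c mod 3 = (0::nat)" by (simp add: mod_Suc)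
lemma e_Suc1': "Suc c mod 3 = Suc 0 \<longleftrightarrow> c mod 3 = (0::nat)" by (simp add: mod_Suc)
lemma e_SS: "Suc (Suc c) mod 3 = 2 \<longleftrightarrow> c mod 3 = (0::nat)" by (simp add: mod_Suc)

lemma phi_swap: "phi d (R1@[c,0]@R2) = phi d (R1@[0,c]@R2)"
  by (simp add: phi_def rb_def[of 0])

lemma eqD_pair:
  assumes "Suc (Suc c) mod 3 = 2 \<or> MM (R1@[Suc (Suc c)]@R2) = 0"
  shows "phi True (R1@[Suc (Suc c)]@R2) = 1 + phi False (R1@[0,0,c]@R2)"
proof -
  define X where "X = FF R1 + FF R2"
  define Y where "Y = MM R1 + MM R2"
  define j where "j = c mod 3"
  have "j < 3" unfolding j_def by simp
  have e1: "phi True (R1@[Suc (Suc c)]@R2) = X + rb c + (if j = 1 then 0 else 1) + (if j = 0 then 0 else 1) + (Y + (if j = 0 then 1 else 0)) div 2"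
    by (simp add: phi_def X_def Y_def rb_Suc e_Suc e_Suc1 e_Suc1' e_SS j_def)
  have e2: "phi False (R1@[0,0,c]@R2) = X + rb c + (Y + (if j = 2 then 1 else 0) + 1) div 2"
    by (simp add: phi_def X_def Y_def j_def rb_def[of 0])
  have a: "j = 0 \<or> Y = 0" using assms by (auto simp: Y_def j_def e_SS split: if_splits)
  obtain t where "Y = 2*t \<or> Y = 2*t+1" using par2 by blast
  then show ?thesis unfolding e1 e2 using lt3[OF \<open>j < 3\<close>] a
    by (elim disjE) simp_all
qed

lemma eqD_one:
  assumes "MM (R1@[1]@R2) = 0"
  shows "phi True (R1@[1]@R2) = 1 + phi False (R1@[0,0]@R2)"
  using assms by (simp add: phi_def rb_def)

lemma eqS:
  assumes "Suc c mod 3 \<noteq> 1 \<or> MM (R1@[Suc c]@R2) = 0"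
  shows "1 + phi True (R1@[0,c]@R2) = phi False (R1@[Suc c]@R2)"
proof -
  define X where "X = FF R1 + FF R2"
  define Y where "Y = MM R1 + MM R2"
  define j where "j = c mod 3"
  have "j < 3" unfolding j_def by simp
  have e3: "phi True (R1@[0,c]@R2) = X + rb c + (Y + (if j = 2 then 1 else 0)) div 2"
    by (simp add: phi_def X_def Y_def j_def rb_def[of 0])
  have e4: "phi False (R1@[Suc c]@R2) = X + rb c + (if j = 1 then 0 else 1) + (Y + (if j = 1 then 1 else 0) + 1) div 2"
    by (simp add: phi_def X_def Y_def rb_Suc e_Suc j_def)
  have a: "j \<noteq> 0 \<or> Y = 0" using assms by (auto simp: Y_def j_def e_Suc1 split: if_splits)
  obtain t where "Y = 2*t \<or> Y = 2*t+1" using par2 by blast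
  then show ?thesis unfolding e3 e4 using lt3[OF \<open>j < 3\<close>] a
    by (elim disjE) simp_all
qed



lemma runs_Cons_True: "runs (True # ys) = Suc (hd (runs ys)) # tl (runs ys)" by simp

lemma hdz: "ys = [] \<or> \<not> hd ys \<Longrightarrow> hd (runs ys) = 0"
  by (cases ys) auto

lemma lastz: "xs = [] \<or> \<not> last xs \<Longrightarrow> last (runs xs) = 0"
proof (cases "xs = []")
  case False
  assume a: "xs = [] \<or> \<not> last xs"
  with False have "xs = butlast xs @ [False]" by (metis append_butlast_last_id)
  then have "runs xs = runs (butlast xs) @ runs []" by (metis runs_False_app)
  then show ?thesis by simp
qed simp

lemma runs_T: "runs (xs @ True # ys) = butlast (runs xs) @ [Suc (last (runs xs) + hd (runs ys))] @ tl (runs ys)"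
  by (simp add: runs_append)
lemma runs_F: "runs (xs @ False # ys) = butlast (runs xs) @ [last (runs xs), hd (runs ys)] @ tl (runs ys)"
  by (simp add: runs_append)
lemma runs_TT: "runs (xs @ True # True # ys) = butlast (runs xs) @ [last (runs xs) + 2 + hd (runs ys)] @ tl (runs ys)"
  by (simp add: runs_append)
lemma runs_FF: "runs (xs @ False # False # ys) = butlast (runs xs) @ [last (runs xs), 0, hd (runs ys)] @ tl (runs ys)"
  by (simp add: runs_append)

lemma first_run: "\<exists>ys. l = replicate (hd (runs l)) True @ ys \<and> hd (runs ys) = 0"
proof (induction l rule: runs.induct)
  case 1 then show ?case by simp
next
  case (2 l) then show ?case by auto
next
  case (3 l) then show ?case by (intro exI[of _ "False # l"]) simp
qed

lemma tl_run: "L \<in> set (tl (runs l)) \<Longrightarrow> 1 \<le> L \<Longrightarrow>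
   \<exists>xs ys. l = xs @ replicate L True @ ys \<and> xs \<noteq> [] \<and> \<not> last xs \<and> hd (runs ys) = 0"
proof (induction l arbitrary: L rule: runs.induct)
  case 1 then show ?case by simp
next
  case (2 l)
  from 2 have "L \<in> set (tl (runs l))" by simp
  obtain xs ys where "l = xs @ replicate L True @ ys \<and> xs \<noteq> [] \<and> \<not> last xs \<and> hd (runs ys) = 0"
    using 2 \<open>L \<in> set (tl (runs l))\<close> by blast
  then show ?case by (intro exI[of _ "True # xs"] exI[of _ ys]) auto
next
  case (3 l)
  then have "L \<in> set (runs l)" by simp
  then have "L = hd (runs l) \<or> L \<in> set (tl (runs l))" by (metis list.collapse runs_ne set_ConsD)
  then show ?case
  proof
    assume "L = hd (runs l)"
    with first_run[of l] obtain ys where "l = replicate L True @ ys \<and> hd (runs ys) = 0" by auto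
    then show ?case by (intro exI[of _ "[False]"] exI[of _ ys]) auto
  next
    assume "L \<in> set (tl (runs l))"
    moreover have "1 \<le> L" using 3 by simp
    ultimately obtain xs ys where "l = xs @ replicate L True @ ys \<and> xs \<noteq> [] \<and> \<not> last xs \<and> hd (runs ys) = 0"
      using 3 by meson
    then show ?case by (intro exI[of _ "False # xs"] exI[of _ ys]) auto
  qed
qed

lemma run_witness: "L \<in> set (runs l) \<Longrightarrow> 1 \<le> L \<Longrightarrow>
   \<exists>xs ys. l = xs @ replicate L True @ ys \<and> (xs = [] \<or> \<not> last xs) \<and> hd (runs ys) = 0"
proof -
  assume a: "L \<in> set (runs l)" "1 \<le> L"
  then have "L = hd (runs l) \<or> L \<in> set (tl (runs l))" by (metis list.collapse runs_ne set_ConsD)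
  then show ?thesis
  proof
    assume "L = hd (runs l)"
    with first_run[of l] obtain ys where "l = replicate L True @ ys \<and> hd (runs ys) = 0" by auto
    then show ?thesis by (intro exI[of _ "[]"] exI[of _ ys]) auto
  next
    assume "L \<in> set (tl (runs l))"
    from tl_run[OF this a(2)] show ?thesis by blast
  qed
qed

lemma runs_rep0: "runs (replicate L True) = [L]"
  using runs_rep[of L "[]"] by simp

lemma runs_wit: "last (runs xs) = 0 \<Longrightarrow> hd (runs ys) = 0 \<Longrightarrow>
   runs (xs @ replicate L True @ ys) = butlast (runs xs) @ [L] @ tl (runs ys)"
  by (simp add: runs_append runs_rep runs_rep0)

lemma true_run: "True \<in> set l \<Longrightarrow> \<exists>L\<in>set (runs l). 1 \<le> L"
proof (induction l rule: runs.induct)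
  case (2 l) then show ?case by (cases "runs l") auto
qed auto

lemma no_true_run: "True \<notin> set l \<Longrightarrow> L \<in> set (runs l) \<Longrightarrow> L = 0"
proof (induction l arbitrary: L rule: runs.induct)
qed auto



definition cell :: "nat \<Rightarrow> nat set \<Rightarrow> nat \<Rightarrow> bool" where
  "cell h D i = (if i < h then 2*i \<notin> D else if i = h then False else Suc (2*(i - Suc h)) \<notin> D)"
definition lst :: "nat \<Rightarrow> nat set \<Rightarrow> bool list" where
  "lst h D = map (cell h D) [0..<Suc (2*h)]"
definition pos :: "nat \<Rightarrow> nat \<Rightarrow> nat" where
  "pos h x = (if even x then x div 2 else Suc (h + x div 2))"
definition vert :: "nat \<Rightarrow> nat \<Rightarrow> nat" where
  "vert h i = (if i < h then 2*i else Suc (2*(i - Suc h)))"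

lemma len_lst[simp]: "length (lst h D) = Suc (2*h)"
  by (simp add: lst_def)
lemma nth_lst: "i < Suc (2*h) \<Longrightarrow> lst h D ! i = cell h D i"
  unfolding lst_def by (simp del: upt_Suc)
lemma pos_lt: "x < 2*h \<Longrightarrow> pos h x < Suc (2*h) \<and> pos h x \<noteq> h \<and> vert h (pos h x) = x"
  unfolding pos_def vert_def by (cases "even x") (auto elim!: evenE oddE)
lemma vert_lt: "i < Suc (2*h) \<Longrightarrow> i \<noteq> h \<Longrightarrow> vert h i < 2*h \<and> pos h (vert h i) = i"
  unfolding pos_def vert_def by auto
lemma cell_vert: "i \<noteq> h \<Longrightarrow> cell h D i = (vert h i \<notin> D)"
  unfolding cell_def vert_def by auto
lemma cell_h[simp]: "cell h D h = False"
  unfolding cell_def by auto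
lemma pos_add2: "pos h (x+2) = Suc (pos h x)"
  unfolding pos_def by auto
lemma pos_SS: "pos h (Suc (Suc x)) = Suc (pos h x)"
  using pos_add2[of h x] by simp
lemma vert_Suc: "i \<noteq> h \<Longrightarrow> Suc i \<noteq> h \<Longrightarrow> vert h (Suc i) = vert h i + 2"
  unfolding vert_def by auto
lemma nth_pos: "x < 2*h \<Longrightarrow> lst h D ! pos h x = (x \<notin> D)"
  using pos_lt[of x h] cell_vert[of "pos h x" h D] by (simp add: nth_lst)

lemma lst_insert: "x < 2*h \<Longrightarrow> lst h (insert x D) = (lst h D)[pos h x := False]"
proof (rule nth_equalityI)
  assume x: "x < 2*h"
  show "length (lst h (insert x D)) = length ((lst h D)[pos h x := False])" by simp
  fix i assume "i < length (lst h (insert x D))"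
  then have i: "i < Suc (2*h)" by simp
  show "lst h (insert x D) ! i = (lst h D)[pos h x := False] ! i"
  proof (cases "i = h")
    case True
    then show ?thesis using i x pos_lt[of x h] by (simp add: nth_lst nth_list_update)
  next
    case False
    have "pos h x = i \<longleftrightarrow> vert h i = x" using pos_lt[OF x] vert_lt[OF i False] by metis
    then show ?thesis using i x False by (auto simp: nth_lst nth_list_update cell_vert)
  qed
qed

lemma pos_hi: "x < 2*h \<Longrightarrow> 2*h \<le> x+2 \<Longrightarrow> Suc (pos h x) = h \<or> Suc (pos h x) = Suc (2*h)"
  unfolding pos_def by (cases "even x") (auto elim!: evenE oddE)


definition nb :: "nat \<Rightarrow> nat \<Rightarrow> nat set" where "nb h u = open_nbhd {0..<2*h} path_E u"
lemma mem_nb: "w \<in> nb h u \<longleftrightarrow> w < 2*h \<and> (u = Suc w \<or> w = Suc u)"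
  by (auto simp: nb_def open_nbhd_def path_E_def)
lemma mem_LM: "u \<in> legal_moves {0..<2*h} path_E D \<longleftrightarrow> u < 2*h \<and> (\<exists>w. w \<in> nb h u \<and> w \<notin> D)"
  by (auto simp: legal_moves_def nb_def[symmetric])

definition rtrans :: "nat list \<Rightarrow> nat list \<Rightarrow> bool" where
  "rtrans R R' = ((\<exists>R1 R2 c. R = R1@[Suc c]@R2 \<and> (R' = R1@[0,c]@R2 \<or> R' = R1@[c,0]@R2))
     \<or> (\<exists>R1 R2 a c. R = R1@[a+2+c]@R2 \<and> R' = R1@[a,0,c]@R2))"

lemma rtrans_bounds: "rtrans R R' \<Longrightarrow> phi True R \<le> 1 + phi False R' \<and> 1 + phi True R' \<le> phi False R"
  unfolding rtrans_def using tr_single tr_pair phi_swap by (elim disjE exE conjE) metis+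

lemma single_split: "p < length l \<Longrightarrow> l!p \<Longrightarrow> l = take p l @ True # drop (Suc p) l \<and> l[p:=False] = take p l @ False # drop (Suc p) l"
  by (metis id_take_nth_drop upd_conv_take_nth_drop)

lemma pair_split: "Suc p < length l \<Longrightarrow> l!p \<Longrightarrow> l!Suc p \<Longrightarrow>
   l = take p l @ True # True # drop (Suc (Suc p)) l \<and> l[Suc p := False, p := False] = take p l @ False # False # drop (Suc (Suc p)) l"
proof -
  assume a: "Suc p < length l" "l!p" "l!Suc p"
  have d: "drop p l = l!p # l!Suc p # drop (Suc (Suc p)) l"
    using a(1) by (metis Cons_nth_drop_Suc Suc_lessD)
  have "l = take p l @ drop p l" by simp
  moreover have "l[Suc p := False, p := False] = take p l @ False # False # drop (Suc (Suc p)) l"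
  proof -
    have "l[Suc p := False] = take (Suc p) l @ False # drop (Suc (Suc p)) l"
      using a(1) by (rule upd_conv_take_nth_drop)
    moreover have "take (Suc p) l = take p l @ [l!p]" using a(1) by (simp add: take_Suc_conv_app_nth)
    ultimately show ?thesis using a(1) by (simp add: list_update_append min_def)
  qed
  ultimately show ?thesis using d a by simp
qed

lemma last_take: "0 < p \<Longrightarrow> p \<le> length l \<Longrightarrow> last (take p l) = l ! (p - 1)"
  by (metis Suc_diff_1 Suc_le_lessD last_snoc take_Suc_conv_app_nth)

lemma hd_drop: "p < length l \<Longrightarrow> hd (drop p l) = l ! p"
  by (simp add: hd_drop_conv_nth)


lemma classify:
  assumes u: "u \<in> legal_moves {0..<2*h} path_E D"
  shows "rtrans (runs (lst h D)) (runs (lst h (D \<union> nb h u)))"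
proof -
  define l where "l = lst h D"
  from u obtain w where u2: "u < 2*h" and w: "w \<in> nb h u" "w \<notin> D" by (auto simp: mem_LM)
  consider (A) "1 \<le> u \<and> u - 1 \<notin> D \<and> Suc u < 2*h \<and> Suc u \<notin> D"
    | (B) "1 \<le> u \<and> u - 1 \<notin> D \<and> \<not> (Suc u < 2*h \<and> Suc u \<notin> D)"
    | (C) "\<not> (1 \<le> u \<and> u - 1 \<notin> D) \<and> Suc u < 2*h \<and> Suc u \<notin> D"
    using w by (auto simp: mem_nb) blast
  then show ?thesis
  proof cases
    case A
    define x where "x = u - 1"
    have x: "x < 2*h" "x + 2 < 2*h" "x \<notin> D" "x + 2 \<notin> D" using A u2 by (auto simp: x_def)
    have "D \<union> nb h u = insert x (insert (x+2) D)" using A u2 by (auto simp: mem_nb x_def)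
    then have l': "lst h (D \<union> nb h u) = l[Suc (pos h x) := False, pos h x := False]"
      using x by (simp add: lst_insert pos_add2 pos_SS l_def)
    have len: "Suc (pos h x) < length l" using pos_lt[OF x(2)] by (simp add: pos_add2 pos_SS l_def)
    have t: "l ! pos h x" "l ! Suc (pos h x)" using x nth_pos[of x h D] nth_pos[of "x+2" h D]
      by (auto simp: l_def pos_add2 pos_SS)
    note ps = pair_split[OF len t]
    define xs where "xs = take (pos h x) l"
    define ys where "ys = drop (Suc (Suc (pos h x))) l"
    have r1: "runs l = butlast (runs xs) @ [last (runs xs) + 2 + hd (runs ys)] @ tl (runs ys)"
      using ps runs_TT[of xs ys] unfolding xs_def ys_def by simp
    have r2: "runs (lst h (D \<union> nb h u)) = butlast (runs xs) @ [last (runs xs), 0, hd (runs ys)] @ tl (runs ys)"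
      using ps runs_FF[of xs ys] l' unfolding xs_def ys_def by simp
    show ?thesis unfolding rtrans_def l_def[symmetric] r1 r2 by blast
  next
    case B
    define x where "x = u - 1"
    have x: "x < 2*h" "x \<notin> D" "x + 2 < 2*h \<Longrightarrow> x + 2 \<in> D" using B u2 by (auto simp: x_def)
    have "D \<union> nb h u = insert x D" using B u2 by (auto simp: mem_nb x_def)
    then have l': "lst h (D \<union> nb h u) = l[pos h x := False]"
      using x by (simp add: lst_insert l_def)
    have p: "pos h x < length l" using pos_lt[OF x(1)] by (simp add: l_def)
    moreover have "l ! pos h x" using x nth_pos[of x h D] by (auto simp: l_def)
    ultimately have sp: "l = take (pos h x) l @ True # drop (Suc (pos h x)) l"
        "l[pos h x := False] = take (pos h x) l @ False # drop (Suc (pos h x)) l"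
      using single_split by blast+
    have "hd (runs (drop (Suc (pos h x)) l)) = 0"
    proof (rule hdz)
      show "drop (Suc (pos h x)) l = [] \<or> \<not> hd (drop (Suc (pos h x)) l)"
      proof (cases "x + 2 < 2*h")
        case True
        then show ?thesis using x(3) nth_pos[of "x+2" h D] pos_lt[OF True]
          by (simp add: hd_drop pos_add2 pos_SS l_def)
      next
        case False
        then have "Suc (pos h x) = h \<or> Suc (pos h x) = Suc (2*h)" using pos_hi[OF x(1)] by simp
        then show ?thesis by (auto simp: hd_drop l_def nth_lst)
      qed
    qed
    then have r1: "runs l = butlast (runs (take (pos h x) l)) @ [Suc (last (runs (take (pos h x) l)))] @ tl (runs (drop (Suc (pos h x)) l))"
      and r2: "runs (l[pos h x := False]) = butlast (runs (take (pos h x) l)) @ [last (runs (take (pos h x) l)), 0] @ tl (runs (drop (Suc (pos h x)) l))"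
      using sp runs_T[of "take (pos h x) l" "drop (Suc (pos h x)) l"] runs_F[of "take (pos h x) l" "drop (Suc (pos h x)) l"]
      by simp_all
    show ?thesis unfolding rtrans_def l_def[symmetric] l' r1 r2 by blast
  next
    case C
    define x where "x = Suc u"
    have x: "x < 2*h" "x \<notin> D" "2 \<le> x \<Longrightarrow> x - 2 \<in> D" "1 \<le> x" using C u2 by (auto simp: x_def)
    have "D \<union> nb h u = insert x D" using C u2 by (auto simp: mem_nb x_def)
    then have l': "lst h (D \<union> nb h u) = l[pos h x := False]"
      using x by (simp add: lst_insert l_def)
    have p: "pos h x < length l" using pos_lt[OF x(1)] by (simp add: l_def)
    moreover have "l ! pos h x" using x nth_pos[of x h D] by (auto simp: l_def)
    ultimately have sp: "l = take (pos h x) l @ True # drop (Suc (pos h x)) l"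
        "l[pos h x := False] = take (pos h x) l @ False # drop (Suc (pos h x)) l"
      using single_split by blast+
    have "last (runs (take (pos h x) l)) = 0"
    proof (rule lastz)
      show "take (pos h x) l = [] \<or> \<not> last (take (pos h x) l)"
      proof (cases "2 \<le> x")
        case True
        have e: "pos h x = Suc (pos h (x - 2))" using pos_add2[of h "x-2"] True by (metis le_add_diff_inverse2)
        have "x - 2 < 2*h" using x by simp
        then show ?thesis using x(3)[OF True] nth_pos[of "x-2" h D] p e
          by (simp add: last_take l_def)
      next
        case False
        then have "x = 1" using x by simp
        then have "pos h x = Suc h" by (simp add: pos_def)
        then show ?thesis using p by (simp add: last_take l_def nth_lst)
      qed
    qed
    then have r1: "runs l = butlast (runs (take (pos h x) l)) @ [Suc (hd (runs (drop (Suc (pos h x)) l)))] @ tl (runs (drop (Suc (pos h x)) l))"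
      and r2: "runs (l[pos h x := False]) = butlast (runs (take (pos h x) l)) @ [0, hd (runs (drop (Suc (pos h x)) l))] @ tl (runs (drop (Suc (pos h x)) l))"
      using sp runs_T[of "take (pos h x) l" "drop (Suc (pos h x)) l"] runs_F[of "take (pos h x) l" "drop (Suc (pos h x)) l"]
      by simp_all
    show ?thesis unfolding rtrans_def l_def[symmetric] l' r1 r2 by blast
  qed
qed


lemma pair_real:
  assumes L: "L \<in> set (runs (lst h D))" "2 \<le> L"
  shows "\<exists>u \<in> legal_moves {0..<2*h} path_E D. \<exists>R1 R2. runs (lst h D) = R1@[L]@R2 \<and>
           runs (lst h (D \<union> nb h u)) = R1@[0,0,L-2]@R2"
proof -
  define l where "l = lst h D"
  obtain xs ys where w: "l = xs @ replicate L True @ ys" "xs = [] \<or> \<not> last xs" "hd (runs ys) = 0"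
    using run_witness[of L l] L by (auto simp: l_def)
  have "L = Suc (Suc (L-2))" using L(2) by simp
  then have rep: "replicate L True = True # True # replicate (L-2) True"
    by (metis replicate_Suc)
  define p where "p = length xs"
  have lp: "l ! p" "l ! Suc p" "Suc p < Suc (2*h)"
    using w(1) rep len_lst[of h D] unfolding p_def l_def[symmetric] by (auto simp: nth_append)
  have ph: "p \<noteq> h" "Suc p \<noteq> h" using lp nth_lst[of _ h D] by (auto simp: l_def)
  define x where "x = vert h p"
  have x: "x < 2*h" "pos h x = p" using vert_lt[of p h] lp ph by (auto simp: x_def)
  have x2: "vert h (Suc p) = x + 2" using vert_Suc[OF ph] by (simp add: x_def)
  have x2l: "x + 2 < 2*h" using vert_lt[OF lp(3) ph(2)] x2 by simp
  have xD: "x \<notin> D" "x + 2 \<notin> D" using lp x x2 x2l nth_pos[of x h D] nth_pos[of "x+2" h D]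
    by (auto simp: l_def pos_add2 pos_SS)
  have uLM: "Suc x \<in> legal_moves {0..<2*h} path_E D" using x xD x2l by (auto simp: mem_LM mem_nb)
  have "D \<union> nb h (Suc x) = insert x (insert (x+2) D)" using x2l by (auto simp: mem_nb)
  then have l': "lst h (D \<union> nb h (Suc x)) = xs @ False # False # (replicate (L-2) True @ ys)"
    using x x2l w(1) rep by (simp add: lst_insert pos_SS l_def[symmetric] p_def list_update_append)
  have lx: "last (runs xs) = 0" using w(2) by (rule lastz)
  have r1: "runs l = butlast (runs xs) @ [L] @ tl (runs ys)" using runs_wit[OF lx w(3)] w(1) by simp
  have r2: "runs (lst h (D \<union> nb h (Suc x))) = butlast (runs xs) @ [0,0,L-2] @ tl (runs ys)"
    unfolding l' runs_FF using lx w(3) by (simp add: runs_rep)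
  show ?thesis
    apply (rule bexI[OF _ uLM])
    apply (rule exI[of _ "butlast (runs xs)"], rule exI[of _ "tl (runs ys)"])
    using r1 r2 unfolding l_def by (rule conjI)
qed


lemma single_real:
  assumes L: "L \<in> set (runs (lst h D))" "1 \<le> L"
  shows "\<exists>u \<in> legal_moves {0..<2*h} path_E D. \<exists>R1 R2. runs (lst h D) = R1@[L]@R2 \<and>
           (runs (lst h (D \<union> nb h u)) = R1@[0,L-1]@R2 \<or> runs (lst h (D \<union> nb h u)) = R1@[L-1,0]@R2)"
proof -
  define l where "l = lst h D"
  obtain xs ys where w: "l = xs @ replicate L True @ ys" "xs = [] \<or> \<not> last xs" "hd (runs ys) = 0"
    using run_witness[of L l] L by (auto simp: l_def)
  have "L = Suc (L-1)" using L(2) by simp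
  then have rep: "replicate L True = True # replicate (L-1) True"
    by (metis replicate_Suc)
  have lx: "last (runs xs) = 0" using w(2) by (rule lastz)
  have r1: "runs l = butlast (runs xs) @ [L] @ tl (runs ys)" using runs_wit[OF lx w(3)] w(1) by simp
  show ?thesis
  proof (cases "xs = []")
    case False
    define p where "p = length xs"
    have p1: "1 \<le> p" using False by (simp add: p_def Suc_le_eq)
    have lp: "l ! p" "p < Suc (2*h)" "\<not> l ! (p - 1)"
      using w rep len_lst[of h D] False unfolding p_def l_def[symmetric]
      by (auto simp: nth_append last_conv_nth)
    have ph: "p \<noteq> h" using lp nth_lst[of _ h D] by (auto simp: l_def)
    define x where "x = vert h p"
    have x: "x < 2*h" "pos h x = p" using vert_lt[of p h] lp ph by (auto simp: x_def)
    have xD: "x \<notin> D" using lp x nth_pos[of x h D] by (auto simp: l_def)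
    have x1: "1 \<le> x" using x p1 by (cases x) (auto simp: pos_def)
    have x2: "2 \<le> x \<Longrightarrow> x - 2 \<in> D"
    proof -
      assume "2 \<le> x"
      then have e: "pos h x = Suc (pos h (x - 2))" using pos_add2[of h "x-2"] by (metis le_add_diff_inverse2)
      have "x - 2 < 2*h" using x by simp
      then show "x - 2 \<in> D" using nth_pos[of "x-2" h D] e x lp by (simp add: l_def)
    qed
    have uLM: "x - 1 \<in> legal_moves {0..<2*h} path_E D" using x xD x1 by (auto simp: mem_LM mem_nb)
    have "D \<union> nb h (x - 1) = insert x D"
    proof -
      have "w \<in> D" if "w < 2*h" "x - 1 = Suc w" for w
      proof -
        have "2 \<le> x" "x - 2 = w" using that x1 by simp_all
        then show ?thesis using x2 by auto
      qed
      then show ?thesis using x x1 by (auto simp: mem_nb)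
    qed
    then have l': "lst h (D \<union> nb h (x-1)) = xs @ False # (replicate (L-1) True @ ys)"
      using x w(1) rep by (simp add: lst_insert l_def[symmetric] p_def list_update_append)
    have r2: "runs (lst h (D \<union> nb h (x-1))) = butlast (runs xs) @ [0,L-1] @ tl (runs ys)"
      unfolding l' runs_F using lx w(3) by (simp add: runs_rep)
    show ?thesis
      apply (rule bexI[OF _ uLM])
      apply (rule exI[of _ "butlast (runs xs)"], rule exI[of _ "tl (runs ys)"])
      using r1 r2 unfolding l_def by blast
  next
    case True
    have lL: "\<forall>i<L. l ! i" using w True by (simp add: nth_append)
    have "L \<le> h"
    proof (rule ccontr)
      assume "\<not> L \<le> h"
      then have "l ! h" using lL by simp
      then show False by (simp add: l_def nth_lst)
    qed
    then have Lh: "L < length l" by (simp add: l_def)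
    have ys: "ys \<noteq> []" using Lh w True by simp
    have hy: "\<not> hd ys" using ys w(3) by (cases ys) (auto split: bool.splits)
    have lLf: "\<not> l ! L" using w True ys hy by (simp add: nth_append hd_conv_nth)
    define p where "p = L - 1"
    have ph: "p < h" using \<open>L \<le> h\<close> L(2) by (simp add: p_def)
    define x where "x = 2*p"
    have x: "x < 2*h" "pos h x = p" using ph by (auto simp: x_def pos_def)
    have xD: "x \<notin> D" using lL x nth_pos[of x h D] L(2) by (auto simp: l_def p_def)
    have x2: "x + 2 < 2*h \<Longrightarrow> x + 2 \<in> D"
    proof -
      assume a: "x + 2 < 2*h"
      have "pos h (x+2) = L" using x L(2) by (simp add: pos_add2 pos_SS p_def)
      then show "x + 2 \<in> D" using nth_pos[OF a, of D] lLf by (simp add: l_def)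
    qed
    have "Suc x < 2*h" "x \<in> nb h (Suc x)" using x ph by (auto simp: mem_nb x_def)
    then have uLM: "Suc x \<in> legal_moves {0..<2*h} path_E D" using xD unfolding mem_LM by blast
    have "D \<union> nb h (Suc x) = insert x D" using x x2 by (auto simp: mem_nb)
    then have l': "lst h (D \<union> nb h (Suc x)) = replicate (L-1) True @ False # ys"
    proof -
      assume e: "D \<union> nb h (Suc x) = insert x D"
      have "l = replicate (L-1) True @ True # ys" using w True rep by (simp add: replicate_append_same)
      moreover have "length (replicate (L-1) True) = p" by (simp add: p_def)
      ultimately have "l[p := False] = replicate (L-1) True @ False # ys"
        by (metis list_update_length)
      then show ?thesis using e x by (simp add: lst_insert l_def)
    qed
    have r2: "runs (lst h (D \<union> nb h (Suc x))) = [] @ [L-1,0] @ tl (runs ys)"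
      unfolding l' runs_F using w(3) by (simp add: runs_rep0)
    have r1': "runs l = [] @ [L] @ tl (runs ys)" using r1 True by simp
    show ?thesis
      apply (rule bexI[OF _ uLM])
      apply (rule exI[of _ "[]"], rule exI[of _ "tl (runs ys)"])
      using r1' r2 unfolding l_def by blast
  qed
qed



lemma phi_zero: "\<forall>L\<in>set R. L = 0 \<Longrightarrow> phi d R = 0"
proof -
  assume a: "\<forall>L\<in>set R. L = 0"
  have "FF R = 0" using a by (induction R) (auto simp: rb_def)
  moreover have "MM R = 0" using a by (induction R) auto
  ultimately show ?thesis by (simp add: phi_def)
qed

lemma MM_zero: "(\<forall>L\<in>set R. L mod 3 \<noteq> 2) \<Longrightarrow> MM R = 0"
  by (induction R) auto

lemma Min_help: "finite A \<Longrightarrow> (\<forall>u\<in>A. P \<le> 1 + g u) \<Longrightarrow> (\<exists>u\<in>A. P = 1 + g u) \<Longrightarrow> 1 + Min (g ` A) = (P::nat)"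
proof -
  assume f: "finite A" and a: "\<forall>u\<in>A. P \<le> 1 + g u" and b: "\<exists>u\<in>A. P = 1 + g u"
  then obtain u where u: "u \<in> A" "P = 1 + g u" by blast
  have "Min (g ` A) = P - 1"
    by (rule Min_eqI) (use f a u in auto)
  then show ?thesis using u by simp
qed

lemma Max_help: "finite A \<Longrightarrow> (\<forall>u\<in>A. 1 + g u \<le> P) \<Longrightarrow> (\<exists>u\<in>A. P = 1 + g u) \<Longrightarrow> 1 + Max (g ` A) = (P::nat)"
proof -
  assume f: "finite A" and a: "\<forall>u\<in>A. 1 + g u \<le> P" and b: "\<exists>u\<in>A. P = 1 + g u"
  then obtain u where u: "u \<in> A" "P = 1 + g u" by blast
  have "Max (g ` A) = P - 1"
    by (rule Max_eqI) (use f a u in auto)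
  then show ?thesis using u by simp
qed

lemma exists_D:
  assumes "\<exists>L\<in>set (runs (lst h D)). 1 \<le> L"
  shows "\<exists>u\<in>legal_moves {0..<2*h} path_E D. phi True (runs (lst h D)) = 1 + phi False (runs (lst h (D \<union> nb h u)))"
proof (cases "\<exists>L\<in>set (runs (lst h D)). L mod 3 = 2")
  case True
  then obtain L where L: "L \<in> set (runs (lst h D))" "L mod 3 = 2" by blast
  then have "2 \<le> L" by presburger
  from pair_real[OF L(1) this] obtain u R1 R2 where
    u: "u \<in> legal_moves {0..<2*h} path_E D" "runs (lst h D) = R1@[L]@R2" "runs (lst h (D \<union> nb h u)) = R1@[0,0,L-2]@R2"
    by blast
  have "L = Suc (Suc (L-2))" using \<open>2 \<le> L\<close> by simp
  then have "phi True (R1@[L]@R2) = 1 + phi False (R1@[0,0,L-2]@R2)"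
    using eqD_pair[of "L-2" R1 R2] L(2) by simp
  then show ?thesis using u by metis
next
  case False
  then have M0: "MM (runs (lst h D)) = 0" by (intro MM_zero) blast
  from assms obtain L where L: "L \<in> set (runs (lst h D))" "1 \<le> L" by blast
  show ?thesis
  proof (cases "2 \<le> L")
    case True
    from pair_real[OF L(1) this] obtain u R1 R2 where
      u: "u \<in> legal_moves {0..<2*h} path_E D" "runs (lst h D) = R1@[L]@R2" "runs (lst h (D \<union> nb h u)) = R1@[0,0,L-2]@R2"
      by blast
    have "L = Suc (Suc (L-2))" using True by simp
    then have "phi True (R1@[L]@R2) = 1 + phi False (R1@[0,0,L-2]@R2)"
      using eqD_pair[of "L-2" R1 R2] M0 u(2) by simp
    then show ?thesis using u by metis
  next
    case False
    then have L1: "L = 1" using L(2) by simp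
    from single_real[OF L] obtain u R1 R2 where
      u: "u \<in> legal_moves {0..<2*h} path_E D" "runs (lst h D) = R1@[L]@R2"
         "runs (lst h (D \<union> nb h u)) = R1@[0,L-1]@R2 \<or> runs (lst h (D \<union> nb h u)) = R1@[L-1,0]@R2"
      by blast
    have "runs (lst h (D \<union> nb h u)) = R1@[0,0]@R2" using u(3) L1 by auto
    moreover have "phi True (R1@[1]@R2) = 1 + phi False (R1@[0,0]@R2)"
      using eqD_one[of R1 R2] M0 u(2) L1 by simp
    ultimately show ?thesis using u L1 by metis
  qed
qed

lemma exists_S:
  assumes "\<exists>L\<in>set (runs (lst h D)). 1 \<le> L"
  shows "\<exists>u\<in>legal_moves {0..<2*h} path_E D. phi False (runs (lst h D)) = 1 + phi True (runs (lst h (D \<union> nb h u)))"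
proof -
  obtain L where L: "L \<in> set (runs (lst h D))" "1 \<le> L" "L mod 3 \<noteq> 1 \<or> MM (runs (lst h D)) = 0"
  proof (cases "\<exists>L\<in>set (runs (lst h D)). 1 \<le> L \<and> L mod 3 \<noteq> 1")
    case True
    then show ?thesis using that by blast
  next
    case False
    then have "MM (runs (lst h D)) = 0" by (intro MM_zero) (metis One_nat_def Suc_leI gr0I mod_0 zero_neq_numeral numeral_2_eq_2 nat.inject)
    then show ?thesis using that assms by blast
  qed
  from single_real[OF L(1,2)] obtain u R1 R2 where
    u: "u \<in> legal_moves {0..<2*h} path_E D" "runs (lst h D) = R1@[L]@R2"
       "runs (lst h (D \<union> nb h u)) = R1@[0,L-1]@R2 \<or> runs (lst h (D \<union> nb h u)) = R1@[L-1,0]@R2"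
    by blast
  have e: "phi True (runs (lst h (D \<union> nb h u))) = phi True (R1@[0,L-1]@R2)" using u(3) phi_swap by metis
  have "L = Suc (L-1)" using L(2) by simp
  then have "1 + phi True (R1@[0,L-1]@R2) = phi False (R1@[L]@R2)"
    using eqS[of "L-1" R1 R2] L(3) u(2) by simp
  then show ?thesis using u e by metis
qed


lemma main_val:
  assumes h1: "1 \<le> h"
  shows "card ({0..<2*h} - D) < f \<Longrightarrow> tg_val f {0..<2*h} path_E D d = phi d (runs (lst h D))"
proof (induction f arbitrary: D d)
  case 0 then show ?case by simp
next
  case (Suc f)
  define LM where "LM = legal_moves {0..<2*h} path_E D"
  have fin: "finite LM" unfolding LM_def legal_moves_def by simp
  have nbe: "open_nbhd {0..<2*h} path_E u = nb h u" for u by (simp add: nb_def)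
  have IH: "tg_val f {0..<2*h} path_E (D \<union> nb h u) d' = phi d' (runs (lst h (D \<union> nb h u)))"
    if u: "u \<in> LM" for u d'
  proof (rule Suc.IH)
    from u obtain w where w: "w \<in> nb h u" "w \<notin> D" unfolding LM_def by (auto simp: mem_LM)
    have "{0..<2*h} - (D \<union> nb h u) \<subset> {0..<2*h} - D" using w by (auto simp: mem_nb)
    then have "card ({0..<2*h} - (D \<union> nb h u)) < card ({0..<2*h} - D)" by (intro psubset_card_mono) auto
    then show "card ({0..<2*h} - (D \<union> nb h u)) < f" using Suc.prems by simp
  qed
  show ?case
  proof (cases "LM = {}")
    case True
    have "\<forall>x<2*h. x \<in> D"
    proof (intro allI impI, rule ccontr)
      fix x assume x: "x < 2*h" "x \<notin> D"
      define u where "u = (if Suc x < 2*h then Suc x else x - 1)"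
      have "Suc x < 2*h \<or> 1 \<le> x" using h1 x by linarith
      then have "u < 2*h" "x \<in> nb h u" using x by (auto simp: u_def mem_nb)
      then have "u \<in> LM" using x(2) unfolding LM_def mem_LM by blast
      then show False using True by simp
    qed
    then have "True \<notin> set (lst h D)"
      by (auto simp: in_set_conv_nth nth_lst) (metis cell_vert cell_h vert_lt)
    then have "phi d (runs (lst h D)) = 0" using no_true_run phi_zero by blast
    then show ?thesis using True by (simp add: LM_def[symmetric])
  next
    case False
    then obtain u0 where "u0 \<in> LM" by blast
    then obtain x where x: "x < 2*h" "x \<notin> D" unfolding LM_def by (auto simp: mem_LM mem_nb)
    then have "True \<in> set (lst h D)" using nth_pos[of x h D] pos_lt[of x h]
      by (metis in_set_conv_nth len_lst)
    then have ex: "\<exists>L\<in>set (runs (lst h D)). 1 \<le> L" by (rule true_run)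
    show ?thesis
    proof (cases d)
      case True
      have "1 + Min ((\<lambda>u. tg_val f {0..<2*h} path_E (D \<union> nb h u) False) ` LM) = phi True (runs (lst h D))"
      proof -
        have "(\<lambda>u. tg_val f {0..<2*h} path_E (D \<union> nb h u) False) ` LM = (\<lambda>u. phi False (runs (lst h (D \<union> nb h u)))) ` LM"
          using IH by (intro image_cong) auto
        moreover have "1 + Min ((\<lambda>u. phi False (runs (lst h (D \<union> nb h u)))) ` LM) = phi True (runs (lst h D))"
          apply (rule Min_help[OF fin])
          using rtrans_bounds[OF classify] exists_D[OF ex] unfolding LM_def by auto
        ultimately show ?thesis by simp
      qed
      then show ?thesis using False True by (simp add: LM_def[symmetric] nbe)
    next
      case False2: False
      have "1 + Max ((\<lambda>u. tg_val f {0..<2*h} path_E (D \<union> nb h u) True) ` LM) = phi False (runs (lst h D))"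
      proof -
        have "(\<lambda>u. tg_val f {0..<2*h} path_E (D \<union> nb h u) True) ` LM = (\<lambda>u. phi True (runs (lst h (D \<union> nb h u)))) ` LM"
          using IH by (intro image_cong) auto
        moreover have "1 + Max ((\<lambda>u. phi True (runs (lst h (D \<union> nb h u)))) ` LM) = phi False (runs (lst h D))"
          apply (rule Max_help[OF fin])
          using rtrans_bounds[OF classify] exists_S[OF ex] unfolding LM_def by auto
        ultimately show ?thesis by simp
      qed
      then show ?thesis using False False2 by (simp add: LM_def[symmetric] nbe)
    qed
  qed
qed



lemma tg_iso:
  assumes bij: "bij_betw g V V'" and hom: "\<forall>x\<in>V. \<forall>y\<in>V. E x y \<longleftrightarrow> E' (g x) (g y)"
  shows "D \<subseteq> V \<Longrightarrow> tg_val f V E D d = tg_val f V' E' (g ` D) d"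
proof (induction f arbitrary: D d)
  case 0 then show ?case by simp
next
  case (Suc f)
  have inj: "inj_on g V" and img: "g ` V = V'" using bij by (auto simp: bij_betw_def)
  have N: "g ` open_nbhd V E u = open_nbhd V' E' (g u)" if "u \<in> V" for u
  proof
    show "g ` open_nbhd V E u \<subseteq> open_nbhd V' E' (g u)"
      using hom that img by (auto simp: open_nbhd_def)
    show "open_nbhd V' E' (g u) \<subseteq> g ` open_nbhd V E u"
    proof
      fix w' assume "w' \<in> open_nbhd V' E' (g u)"
      then have "w' \<in> V'" "E' (g u) w'" by (auto simp: open_nbhd_def)
      then obtain w where "w \<in> V" "w' = g w" using img by auto
      then show "w' \<in> g ` open_nbhd V E u" using hom that \<open>E' (g u) w'\<close> by (auto simp: open_nbhd_def)
    qed
  qed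
  have ND: "open_nbhd V' E' (g u) - g ` D = g ` (open_nbhd V E u - D)" if "u \<in> V" for u
  proof -
    have "open_nbhd V E u \<subseteq> V" by (auto simp: open_nbhd_def)
    then have "g ` (open_nbhd V E u - D) = g ` open_nbhd V E u - g ` D"
      using inj Suc.prems by (intro inj_on_image_set_diff) auto
    then show ?thesis using N[OF that] by simp
  qed
  have LM: "legal_moves V' E' (g ` D) = g ` legal_moves V E D"
  proof
    show "legal_moves V' E' (g ` D) \<subseteq> g ` legal_moves V E D"
    proof
      fix u' assume "u' \<in> legal_moves V' E' (g ` D)"
      then have "u' \<in> V'" "open_nbhd V' E' u' - g ` D \<noteq> {}" by (auto simp: legal_moves_def)
      then obtain u where "u \<in> V" "u' = g u" using img by auto
      then show "u' \<in> g ` legal_moves V E D" using ND \<open>open_nbhd V' E' u' - g ` D \<noteq> {}\<close>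
        by (auto simp: legal_moves_def)
    qed
    show "g ` legal_moves V E D \<subseteq> legal_moves V' E' (g ` D)"
    proof
      fix u' assume "u' \<in> g ` legal_moves V E D"
      then obtain u where u: "u \<in> V" "open_nbhd V E u - D \<noteq> {}" "u' = g u" by (auto simp: legal_moves_def)
      then have "open_nbhd V' E' (g u) - g ` D \<noteq> {}" using ND[OF u(1)] by simp
      then show "u' \<in> legal_moves V' E' (g ` D)" using u img by (auto simp: legal_moves_def)
    qed
  qed
  have sub: "D \<union> open_nbhd V E u \<subseteq> V" for u using Suc.prems by (auto simp: open_nbhd_def)
  have im: "(\<lambda>u'. tg_val f V' E' (g ` D \<union> open_nbhd V' E' u') d') ` legal_moves V' E' (g ` D)
          = (\<lambda>u. tg_val f V E (D \<union> open_nbhd V E u) d') ` legal_moves V E D" for d'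
  proof -
    have "(\<lambda>u'. tg_val f V' E' (g ` D \<union> open_nbhd V' E' u') d') ` legal_moves V' E' (g ` D)
       = (\<lambda>u. tg_val f V' E' (g ` D \<union> open_nbhd V' E' (g u)) d') ` legal_moves V E D"
      unfolding LM image_image by simp
    also have "\<dots> = (\<lambda>u. tg_val f V E (D \<union> open_nbhd V E u) d') ` legal_moves V E D"
    proof (rule image_cong[OF refl])
      fix u assume "u \<in> legal_moves V E D"
      then have "u \<in> V" by (auto simp: legal_moves_def)
      then have "g ` D \<union> open_nbhd V' E' (g u) = g ` (D \<union> open_nbhd V E u)" using N by (simp add: image_Un)
      then show "tg_val f V' E' (g ` D \<union> open_nbhd V' E' (g u)) d' = tg_val f V E (D \<union> open_nbhd V E u) d'"
        using Suc.IH[OF sub] by simp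
    qed
    finally show ?thesis .
  qed
  show ?case using LM im by (simp del: tg_val.simps add: tg_val.simps(2)[of f V E] tg_val.simps(2)[of f V' E'])
qed


lemma rep_upd: "p < k \<Longrightarrow> (replicate k v)[p := w] = replicate p v @ w # replicate (k - Suc p) v"
  by (simp add: upd_conv_take_nth_drop)

lemma lst_empty: "lst h {} = replicate h True @ False # replicate h True"
proof (rule nth_equalityI)
  show "length (lst h {}) = length (replicate h True @ False # replicate h True)" by simp
  fix i assume "i < length (lst h {})"
  then have i: "i < Suc (2*h)" by simp
  show "lst h {} ! i = (replicate h True @ False # replicate h True) ! i"
    using i by (auto simp: nth_lst cell_def nth_append nth_Cons split: nat.splits)
qed

lemma runs_empty: "runs (lst h {}) = [h, h]"
  unfolding lst_empty runs_False_app by (simp add: runs_rep0)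

lemma runs_single_v: "x < 2*h \<Longrightarrow> \<exists>a c. a + c + 1 = h \<and> (runs (lst h {x}) = [a, c, h] \<or> runs (lst h {x}) = [h, a, c])"
proof -
  assume x: "x < 2*h"
  have e: "lst h {x} = (replicate h True @ False # replicate h True)[pos h x := False]"
    using lst_insert[OF x, of "{}"] by (simp add: lst_empty)
  show ?thesis
  proof (cases "pos h x < h")
    case True
    have "lst h {x} = (replicate (pos h x) True @ False # replicate (h - Suc (pos h x)) True) @ False # replicate h True"
      using e True by (simp add: list_update_append rep_upd)
    then have "runs (lst h {x}) = [pos h x, h - Suc (pos h x), h]"
      by (simp only: runs_False_app append_assoc runs_rep0 append_Cons) simp
    then show ?thesis using True by (intro exI[of _ "pos h x"] exI[of _ "h - Suc (pos h x)"]) auto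
  next
    case False
    have pl: "pos h x < Suc (2*h)" "pos h x \<noteq> h" using pos_lt[OF x] by auto
    define q where "q = pos h x - Suc h"
    have q: "q < h" "pos h x = Suc (h + q)" using pl False by (auto simp: q_def)
    have "lst h {x} = replicate h True @ False # (replicate q True @ False # replicate (h - Suc q) True)"
      using e q by (simp add: list_update_append rep_upd)
    then have "runs (lst h {x}) = [h, q, h - Suc q]"
      by (simp only: runs_False_app append_assoc runs_rep0 append_Cons) simp
    then show ?thesis using q by (intro exI[of _ "q"] exI[of _ "h - Suc q"]) auto
  qed
qed

lemma ar_final: "a + c = 3*k \<Longrightarrow> rb a + rb c + ((if a mod 3 = 2 then 1 else 0) + (if c mod 3 = 2 then 1 else 0)) div 2 \<le> 2*k"
proof -
  assume s: "a + c = 3*k"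
  define i where "i = a mod 3"
  define j where "j = c mod 3"
  define p where "p = a div 3"
  define q where "q = c div 3"
  have a: "a = 3*p + i" and c: "c = 3*q + j" unfolding i_def j_def p_def q_def by simp_all
  have "rb a = 2*p + rb i" "rb c = 2*q + rb j" using a c rb3 by auto
  moreover have "i < 3" "j < 3" unfolding i_def j_def by simp_all
  moreover have k: "3*k = 3*p + 3*q + i + j" using s a c by simp
  moreover have "2*p + rb i + 2*q + rb j + ((if i = 2 then 1 else 0) + (if j = 2 then 1 else 0)) div 2 \<le> 2*k"
    using lt3[OF \<open>i < 3\<close>] lt3[OF \<open>j < 3\<close>] k
    by (elim disjE) (simp_all add: rb_def)
  ultimately show ?thesis unfolding i_def[symmetric] j_def[symmetric] by simp
qed


lemma rb_h: "rb (3*k+1) = 2*k+1"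
  using rb3[of k 1] by (simp add: rb_def)

lemma rb_h': "rb (Suc (3*k)) = 2*k+1"
  using rb_h by simp

lemma phi_hh: "phi True [3*k+1, 3*k+1] = 4*k+2"
  by (simp add: phi_def rb_h rb_h')

lemma phi_v: "a + c + 1 = 3*k+1 \<Longrightarrow> phi True [a, c, 3*k+1] \<le> 4*k+1 \<and> phi True [3*k+1, a, c] \<le> 4*k+1"
proof -
  assume "a + c + 1 = 3*k+1"
  then have "a + c = 3*k" by simp
  from ar_final[OF this] show ?thesis by (simp add: phi_def rb_h rb_h' split: if_splits)
qed

theorem lemma3p5:
  fixes V :: "'a set" and E :: "'a \<Rightarrow> 'a \<Rightarrow> bool" and n :: nat and v :: 'a
  assumes "n \<ge> 2" and "n mod 6 = 2"
    and "graph_iso V E (path_V n) path_E"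
    and "v \<in> V"
  shows "gamma_tg_rel V E {v} \<le> gamma_tg V E - 1"
proof -
  obtain g where g: "bij_betw g V (path_V n)" "\<forall>x\<in>V. \<forall>y\<in>V. E x y \<longleftrightarrow> path_E (g x) (g y)"
    using assms(3) unfolding graph_iso_def by blast
  define k where "k = n div 6"
  have nk: "n = 6*k+2" using assms(2) unfolding k_def by presburger
  define h where "h = 3*k+1"
  have nh: "n = 2*h" using nk by (simp add: h_def)
  have h1: "1 \<le> h" by (simp add: h_def)
  have pv: "path_V n = {0..<2*h}" by (simp add: path_V_def nh)
  have cardV: "card V = n" using bij_betw_same_card[OF g(1)] by (simp add: path_V_def)
  have rel: "gamma_tg_rel V E S = phi True (runs (lst h (g ` S)))" if S: "S \<subseteq> V" for S
  proof -
    have "gamma_tg_rel V E S = tg_val (Suc n) {0..<2*h} path_E (g ` S) True"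
      unfolding gamma_tg_rel_def cardV using tg_iso[OF g(1) g(2) S] pv by simp
    also have "\<dots> = phi True (runs (lst h (g ` S)))"
    proof (rule main_val[OF h1])
      have "card ({0..<2*h} - g ` S) \<le> card {0..<2*h}" by (rule card_mono) auto
      then show "card ({0..<2*h} - g ` S) < Suc n" using nh by simp
    qed
    finally show ?thesis .
  qed
  have G: "gamma_tg V E = 4*k+2"
    unfolding gamma_tg_def rel[OF empty_subsetI] using phi_hh[of k] by (simp add: runs_empty h_def)
  have gv: "g v < 2*h" using g(1) assms(4) pv by (auto simp: bij_betw_def)
  from runs_single_v[OF gv] obtain a c where ac: "a + c + 1 = h"
    "runs (lst h {g v}) = [a, c, h] \<or> runs (lst h {g v}) = [h, a, c]" by blast
  have "gamma_tg_rel V E {v} = phi True (runs (lst h {g v}))" using rel[of "{v}"] assms(4) by simp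
  also have "\<dots> \<le> 4*k+1" using ac phi_v[of a c k] unfolding h_def by auto
  finally show ?thesis using G by simp
qed


end
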